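(* Let $(X,\rho)$ be a metric space, $A\in CL(X)$ and $(A_k)\subset CL(X)$. If $f\colon[0,\infty)\to[0,\infty)$ is a modulus such that $\beta:=\lim_{t\to\infty}\frac{f(t)}{t}>0$ and $(A_k)$ is Wijsman strongly Cesàro summable to $A$ with respect to $f$, then $(A_k)$ is Wijsman strongly Cesàro summable to $A$.
   Context: A modulus is a function $f\colon[0,\infty)\to[0,\infty)$ such that $f(x)=0$ iff $x=0$, $f$ is subadditive, increasing and continuous (for such $f$ the limit $\lim_{t\to\infty}f(t)/t$ exists and is finite). $CL(X)$ denotes the set of all non-empty closed subsets of $(X,\rho)$, and $d(x,B)=\inf_{y\in B}\rho(x,y)$. $(A_k)$ is Wijsman strongly Cesàro summable to $A$ if $\lim_{n\to\infty}\frac1n\sum_{k=1}^n|d(x,A_k)-d(x,A)|=0$ for every $x\in X$; it is Wijsman strongly Cesàro summable to $A$ with respect to $f$ if $\lim_{n\to\infty}\frac1n\sum_{k=1}^n f(|d(x,A_k)-d(x,A)|)=0$ for every $x\in X$. *)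

theory Defs
  imports "HOL-Analysis.Analysis"
begin

text \<open>A modulus: a function on [0,\<infinity>) (represented as real => real, only its
values on [0,\<infinity>) matter) with values in [0,\<infinity>), vanishing exactly at 0,
subadditive, increasing and continuous.\<close>
definition modulus :: "(real \<Rightarrow> real) \<Rightarrow> bool" where
  "modulus f \<longleftrightarrow>
     (\<forall>x\<ge>0. f x \<ge> 0) \<and>
     (\<forall>x\<ge>0. f x = 0 \<longleftrightarrow> x = 0) \<and>
     (\<forall>x\<ge>0. \<forall>y\<ge>0. f (x + y) \<le> f x + f y) \<and>
     mono_on {0..} f \<and>
     continuous_on {0..} f"

definition CL :: "'a::metric_space set set" where
  "CL = {A. A \<noteq> {} \<and> closed A}"

definition wijsman_strongly_cesaro :: "(nat \<Rightarrow> 'a::metric_space set) \<Rightarrow> 'a set \<Rightarrow> bool" where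
  "wijsman_strongly_cesaro Ak A \<longleftrightarrow>
     (\<forall>x. (\<lambda>n. (1 / real n) * (\<Sum>k=1..n. \<bar>infdist x (Ak k) - infdist x A\<bar>)) \<longlonglongrightarrow> 0)"

definition wijsman_strongly_cesaro_mod ::
    "(real \<Rightarrow> real) \<Rightarrow> (nat \<Rightarrow> 'a::metric_space set) \<Rightarrow> 'a set \<Rightarrow> bool" where
  "wijsman_strongly_cesaro_mod f Ak A \<longleftrightarrow>
     (\<forall>x. (\<lambda>n. (1 / real n) * (\<Sum>k=1..n. f \<bar>infdist x (Ak k) - infdist x A\<bar>)) \<longlonglongrightarrow> 0)"

end

theory Submission
  imports Defs
begin

lemma mod_mult_le:
  assumes "modulus f" "t \<ge> 0"
  shows "f (real n * t) \<le> real n * f t"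
proof (induction n)
  case 0
  then show ?case using assms unfolding modulus_def by auto
next
  case (Suc n)
  have "f (real (Suc n) * t) = f (real n * t + t)" by (simp add: algebra_simps)
  also have "\<dots> \<le> f (real n * t) + f t" using assms unfolding modulus_def by auto
  also have "\<dots> \<le> real (Suc n) * f t" using Suc by (simp add: algebra_simps)
  finally show ?case .
qed

lemma mod_lower:
  assumes "modulus f" "((\<lambda>t. f t / t) \<longlongrightarrow> \<beta>) at_top" "t > 0"
  shows "\<beta> * t \<le> f t"
proof -
  have "filterlim (\<lambda>n. real n * t) at_top sequentially"
    by (rule filterlim_at_top_mult_tendsto_pos[OF tendsto_const assms(3) filterlim_real_sequentially])
  hence "(\<lambda>n. f (real n * t) / (real n * t)) \<longlonglongrightarrow> \<beta>"
    using filterlim_compose[OF assms(2)] by (auto simp: o_def)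
  moreover have "\<forall>n\<ge>1. f (real n * t) / (real n * t) \<le> f t / t"
  proof (intro allI impI)
    fix n :: nat assume "n \<ge> 1"
    hence "real n * t > 0" using assms(3) by simp
    thus "f (real n * t) / (real n * t) \<le> f t / t"
      using mod_mult_le[OF assms(1), of t n] assms(3) \<open>n\<ge>1\<close>
      by (simp add: divide_simps) (simp add: mult.commute mult.left_commute)
  qed
  ultimately have "\<beta> \<le> f t / t" by (intro LIMSEQ_le_const2) auto
  thus ?thesis using assms(3) by (simp add: field_simps)
qed

theorem theorem4p6:
  fixes A :: "'a::metric_space set" and Ak :: "nat \<Rightarrow> 'a set"
    and f :: "real \<Rightarrow> real" and \<beta> :: real
  assumes "A \<in> CL" and "\<And>k. Ak k \<in> CL"
    and "modulus f"
    and "((\<lambda>t. f t / t) \<longlongrightarrow> \<beta>) at_top" and "\<beta> > 0"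
    and "wijsman_strongly_cesaro_mod f Ak A"
  shows "wijsman_strongly_cesaro Ak A"
  unfolding wijsman_strongly_cesaro_def
proof
  fix x
  have le: "\<beta> * s \<le> f s" if "s \<ge> 0" for s
  proof (cases "s = 0")
    case True thus ?thesis using assms(3) unfolding modulus_def by auto
  next
    case False thus ?thesis using mod_lower[OF assms(3,4)] that by auto
  qed
  let ?g = "\<lambda>n. (1 / real n) * (\<Sum>k=1..n. f \<bar>infdist x (Ak k) - infdist x A\<bar>)"
  have g: "?g \<longlonglongrightarrow> 0" using assms(6) unfolding wijsman_strongly_cesaro_mod_def by auto
  hence g2: "(\<lambda>n. ?g n / \<beta>) \<longlonglongrightarrow> 0" using tendsto_divide_zero by blast
  show "(\<lambda>n. (1 / real n) * (\<Sum>k=1..n. \<bar>infdist x (Ak k) - infdist x A\<bar>)) \<longlonglongrightarrow> 0"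
  proof (rule tendsto_sandwich[OF _ _ tendsto_const g2])
    show "\<forall>\<^sub>F n in sequentially. 0 \<le> (1 / real n) * (\<Sum>k=1..n. \<bar>infdist x (Ak k) - infdist x A\<bar>)"
      by (intro always_eventually allI mult_nonneg_nonneg sum_nonneg) auto
    show "\<forall>\<^sub>F n in sequentially. (1 / real n) * (\<Sum>k=1..n. \<bar>infdist x (Ak k) - infdist x A\<bar>) \<le> ?g n / \<beta>"
    proof (intro always_eventually allI)
      fix n
      have "\<beta> * (\<Sum>k=1..n. \<bar>infdist x (Ak k) - infdist x A\<bar>) \<le> (\<Sum>k=1..n. f \<bar>infdist x (Ak k) - infdist x A\<bar>)"
        unfolding sum_distrib_left by (intro sum_mono le) auto
      hence S: "(\<Sum>k=1..n. \<bar>infdist x (Ak k) - infdist x A\<bar>) \<le> (\<Sum>k=1..n. f \<bar>infdist x (Ak k) - infdist x A\<bar>) / \<beta>"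
        using assms(5) by (simp add: field_simps)
      thus "(1 / real n) * (\<Sum>k=1..n. \<bar>infdist x (Ak k) - infdist x A\<bar>) \<le> ?g n / \<beta>"
      proof -
        have "(1 / real n) * (\<Sum>k=1..n. \<bar>infdist x (Ak k) - infdist x A\<bar>) \<le> (1 / real n) * ((\<Sum>k=1..n. f \<bar>infdist x (Ak k) - infdist x A\<bar>) / \<beta>)"
          using S by (rule mult_left_mono) simp
        thus ?thesis by simp
      qed
    qed
  qed
qed

end
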